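(* For $d\geq 0$ and $n\geq 1$ let $\psi_d(n)=n^d$. For $n\geq 3$ define \[ D^{\psi}(n):=\begin{cases} 2n\log_{9/8}(2), & n\equiv 0\pmod 3,\\ 2n\log_{9/8}(2)+\log_{9/8}(3)-\log_{9/8}(n+2), & n\equiv 1\pmod 3,\\ (n+2)\log_{9/8}(2), & n\equiv 2\pmod 3,\ n\neq 5,\\ \log_{9/8}(512), & n=5. \end{cases} \] Let $n\geq 3$ and let $d$ be an integer with $d>D^{\psi}(n)$. Then \[ \frac{\bigl(q^{\psi_d}(n)\bigr)^2}{q^{\psi_d}(n-1)\,q^{\psi_d}(n+1)}<1 \quad\text{if and only if}\quad n\equiv 1\pmod 3 . \]
   Context: For a double sequence $\{g_d(n)\}_{d\geq 0,n\geq 1}$ of positive reals, the numbers $q^{g_d}(n)$ ($n\geq 0$) are defined as the coefficients of the power series \[ \sum_{n=0}^{\infty} q^{g_d}(n)\,t^n := \frac{1}{1-\sum_{n=1}^{\infty} g_d(n)\,t^n}. \] Here $g_d=\psi_d$, i.e. $\sum_n q^{\psi_d}(n)t^n = 1/(1-\sum_{n\ge1} n^d t^n)$. $\log_{9/8}$ denotes the logarithm to base $9/8$. *)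

theory Defs
  imports "HOL-Analysis.Analysis" "HOL-Computational_Algebra.Formal_Power_Series"
begin

definition qcoef :: "(nat \<Rightarrow> real) \<Rightarrow> nat \<Rightarrow> real" where
  "qcoef g n = fps_nth (inverse (1 - Abs_fps (\<lambda>k. if k = 0 then 0 else g k))) n"

definition psi :: "nat \<Rightarrow> nat \<Rightarrow> real" where
  "psi d n = real n ^ d"

definition Dpsi :: "nat \<Rightarrow> real" where
  "Dpsi n =
    (if n mod 3 = 0 then 2 * real n * log (9/8) 2
     else if n mod 3 = 1 then 2 * real n * log (9/8) 2 + log (9/8) 3 - log (9/8) (real n + 2)
     else if n = 5 then log (9/8) 512
     else (real n + 2) * log (9/8) 2)"

end

theory Submission
  imports Defs
begin


lemma q0: "qcoef g 0 = 1"
proof -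
  let ?F = "1 - Abs_fps (\<lambda>k. if k = 0 then 0 else g k) :: real fps"
  have "fps_nth ?F 0 = 1" by simp
  then show ?thesis unfolding qcoef_def by (simp add: fps_inverse_def)
qed

lemma qrec: "qcoef g (Suc n) = (\<Sum>i=1..Suc n. g i * qcoef g (Suc n - i))"
proof -
  let ?F = "1 - Abs_fps (\<lambda>k. if k = 0 then 0 else g k) :: real fps"
  have F0: "fps_nth ?F 0 = 1" by simp
  have "?F * inverse ?F = 1" by (rule inverse_mult_eq_1') (simp add: F0)
  hence "fps_nth (?F * inverse ?F) (Suc n) = 0" by simp
  hence "(\<Sum>i=0..Suc n. fps_nth ?F i * fps_nth (inverse ?F) (Suc n - i)) = 0" by (simp add: fps_mult_nth)
  hence "fps_nth ?F 0 * fps_nth (inverse ?F) (Suc n) + (\<Sum>i=1..Suc n. fps_nth ?F i * fps_nth (inverse ?F) (Suc n - i)) = 0"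
    by (simp add: sum.atLeast_Suc_atMost)
  moreover have "(\<Sum>i=1..Suc n. fps_nth ?F i * fps_nth (inverse ?F) (Suc n - i)) = - (\<Sum>i=1..Suc n. g i * qcoef g (Suc n - i))"
    by (simp add: qcoef_def sum_negf[symmetric])
  ultimately show ?thesis using F0 by (simp add: qcoef_def)
qed



fun M :: "nat \<Rightarrow> nat" where
  "M 0 = 1" | "M (Suc 0) = 1" | "M (Suc (Suc 0)) = 2" | "M (Suc (Suc (Suc 0))) = 3"
| "M (Suc (Suc (Suc (Suc 0)))) = 4"
| "M (Suc (Suc (Suc (Suc (Suc n))))) = 3 * M (Suc (Suc n))"

lemma M_step: "n \<ge> 2 \<Longrightarrow> M (n + 3) = 3 * M n"
proof -
  assume "n \<ge> 2" then obtain m where "n = Suc (Suc m)" by (cases n; cases "n - 1") auto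
  then show ?thesis by (simp add: numeral_3_eq_3)
qed

lemma M_pos: "M n > 0"
  by (induction n rule: M.induct) auto

lemma M_small: "1 \<le> i \<Longrightarrow> i \<le> 4 \<Longrightarrow> M i = i"
  by (cases i rule: M.cases) auto

lemma M_big: "5 \<le> i \<Longrightarrow> 6 * i \<le> 5 * M i"
proof (induction i rule: less_induct)
  case (less i)
  define m where "m = i - 3"
  have m: "i = m + 3" "m \<ge> 2" using less.prems unfolding m_def by auto
  show ?case
  proof (cases "m \<ge> 5")
    case True
    with less m have "6 * m \<le> 5 * M m" by auto
    then show ?thesis using m M_step by simp
  next
    case False
    with m have "m = 2 \<or> m = 3 \<or> m = 4" by auto
    then show ?thesis using m by (auto simp: numeral_eq_Suc)
  qed
qed

lemma M_ge: "i \<le> M i"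
proof (cases "i \<ge> 5")
  case True thus ?thesis using M_big[of i] by linarith
next
  case False thus ?thesis using M_small[of i] M_pos[of i] by (cases "i = 0") auto
qed

lemma M_mult: "M a * M b = M (a + b) \<or> 9 * (M a * M b) \<le> 8 * M (a + b)"
proof (induction "a + b" arbitrary: a b rule: less_induct)
  case less
  show ?case
  proof (cases "a \<ge> 5")
    case True
    define a' where "a' = a - 3"
    have a': "a = a' + 3" "a' \<ge> 2" using True unfolding a'_def by auto
    have "M a' * M b = M (a' + b) \<or> 9 * (M a' * M b) \<le> 8 * M (a' + b)" using less a' by simp
    moreover have "M a = 3 * M a'" using a' M_step by simp
    moreover have "M (a + b) = 3 * M (a' + b)" using a' M_step[of "a' + b"] by (simp add: algebra_simps)
    ultimately show ?thesis by auto
  next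
    case False
    show ?thesis
    proof (cases "b \<ge> 5")
      case True
      define b' where "b' = b - 3"
      have b': "b = b' + 3" "b' \<ge> 2" using True unfolding b'_def by auto
      have "M a * M b' = M (a + b') \<or> 9 * (M a * M b') \<le> 8 * M (a + b')" using less b' by simp
      moreover have "M b = 3 * M b'" using b' M_step by simp
      moreover have "M (a + b) = 3 * M (a + b')" using b' M_step[of "a + b'"] by (simp add: algebra_simps)
      ultimately show ?thesis by auto
    next
      case False2: False
      have "a \<le> 4" "b \<le> 4" using False False2 by auto
      then have "a = 0 \<or> a = 1 \<or> a = 2 \<or> a = 3 \<or> a = 4" "b = 0 \<or> b = 1 \<or> b = 2 \<or> b = 3 \<or> b = 4" by auto
      then show ?thesis by (elim disjE) (simp_all add: numeral_eq_Suc)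
    qed
  qed
qed

lemma M_supermult: "M a * M b \<le> M (a + b)"
  using M_mult[of a b] by auto

lemma M_3k: "M (3 * k) = 3 ^ k"
proof (induction k)
  case (Suc k)
  show ?case
  proof (cases k)
    case 0 thus ?thesis by (simp add: numeral_eq_Suc)
  next
    case (Suc k') 
    have "M (3 * Suc k) = M (3 * k + 3)" by (simp add: add.commute)
    also have "\<dots> = 3 * M (3 * k)" by (rule M_step) (use Suc in simp)
    finally show ?thesis using Suc.IH by simp
  qed
qed simp

lemma M_3k2: "M (3 * k + 2) = 2 * 3 ^ k"
proof (induction k)
  case (Suc k)
  have "M (3 * Suc k + 2) = M ((3 * k + 2) + 3)" by simp
  also have "\<dots> = 3 * M (3 * k + 2)" by (rule M_step) simp
  finally show ?case using Suc.IH by simp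
qed (simp add: numeral_eq_Suc)

lemma M_3k4: "M (3 * k + 4) = 4 * 3 ^ k"
proof (induction k)
  case (Suc k)
  have "M (3 * Suc k + 4) = M ((3 * k + 4) + 3)" by simp
  also have "\<dots> = 3 * M (3 * k + 4)" by (rule M_step) simp
  finally show ?case using Suc.IH by simp
qed (simp add: numeral_eq_Suc)



abbreviation q where "q d n \<equiv> qcoef (psi d) n"

lemma psi_num: "psi d (numeral k) = numeral k ^ d" by (simp add: psi_def)

lemma psi_nonneg: "0 \<le> psi d i" by (simp add: psi_def)

lemma q_nonneg: "0 \<le> q d n"
proof (induction n rule: less_induct)
  case (less n)
  show ?case
  proof (cases n)
    case 0 thus ?thesis by (simp add: q0)
  next
    case (Suc m)
    have "0 \<le> (\<Sum>i=1..Suc m. psi d i * q d (Suc m - i))"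
      by (rule sum_nonneg) (use less Suc in \<open>auto intro!: mult_nonneg_nonneg psi_nonneg\<close>)
    thus ?thesis using Suc qrec by simp
  qed
qed

lemma q_lower_sum: assumes "T \<subseteq> {1..n}" shows "(\<Sum>i\<in>T. psi d i * q d (n - i)) \<le> q d n"
proof (cases n)
  case 0 with assms have "T = {}" by auto
  thus ?thesis using q_nonneg by simp
next
  case (Suc m)
  have "(\<Sum>i\<in>T. psi d i * q d (n - i)) \<le> (\<Sum>i=1..n. psi d i * q d (n - i))"
    by (rule sum_mono2) (use assms in \<open>auto intro!: mult_nonneg_nonneg psi_nonneg q_nonneg\<close>)
  thus ?thesis using Suc qrec by simp
qed

lemma q_lower1: assumes "1 \<le> i" "i \<le> n" shows "psi d i * q d (n - i) \<le> q d n"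
  using q_lower_sum[of "{i}" n d] assms by simp

lemma q_ge_M: "real (M n) ^ d \<le> q d n"
proof (induction n rule: less_induct)
  case (less n)
  show ?case
  proof (cases "n \<ge> 5")
    case True
    have h1: "psi d 3 * q d (n - 3) \<le> q d n" by (rule q_lower1) (use True in auto)
    have h2: "real (M (n - 3)) ^ d \<le> q d (n - 3)" using less True by simp
    have h3: "M n = 3 * M (n - 3)" using M_step[of "n - 3"] True by simp
    have "real (M n) ^ d = 3 ^ d * real (M (n - 3)) ^ d" using h3 by (simp add: power_mult_distrib)
    also have "\<dots> \<le> 3 ^ d * q d (n - 3)" using h2 by (rule mult_left_mono) simp
    also have "\<dots> = psi d 3 * q d (n - 3)" by (simp add: psi_num)
    also have "\<dots> \<le> q d n" by (rule h1)
    finally show ?thesis .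
  next
    case False
    show ?thesis
    proof (cases "n = 0")
      case True thus ?thesis by (simp add: q0)
    next
      case n0: False
      have "psi d n * q d (n - n) \<le> q d n" by (rule q_lower1) (use n0 in auto)
      hence "real n ^ d \<le> q d n" by (simp only: psi_def[of d n] diff_self_eq_0 q0 mult_1_right)
      thus ?thesis using M_small[of n] n0 False by simp
    qed
  qed
qed

definition c :: "nat \<Rightarrow> real" where "c k = (if k = 0 then 1 else 2 ^ (k - 1))"

lemma sumc: "(\<Sum>i=1..Suc m. c (Suc m - i)) = 2 ^ m"
proof (induction m)
  case 0 thus ?case by (simp add: c_def)
next
  case (Suc m)
  have "(\<Sum>i=1..Suc (Suc m). c (Suc (Suc m) - i)) = c (Suc m) + (\<Sum>i=Suc 1..Suc (Suc m). c (Suc (Suc m) - i))"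
    by (simp add: sum.atLeast_Suc_atMost)
  also have "(\<Sum>i=Suc 1..Suc (Suc m). c (Suc (Suc m) - i)) = (\<Sum>i=1..Suc m. c (Suc (Suc m) - Suc i))"
    by (rule sum.shift_bounds_cl_Suc_ivl)
  also have "\<dots> = 2 ^ m" using Suc by simp
  finally show ?case by (simp add: c_def)
qed

lemma c_nonneg: "0 \<le> c k" by (simp add: c_def)

lemma term_bound:
  assumes "1 \<le> i" "i \<le> n" "q d (n - i) \<le> c (n - i) * real (M (n - i)) ^ d"
  shows "psi d i * q d (n - i) \<le> c (n - i) * (real i * real (M (n - i))) ^ d"
proof -
  have "psi d i * q d (n - i) \<le> psi d i * (c (n - i) * real (M (n - i)) ^ d)"
    by (rule mult_left_mono[OF assms(3) psi_nonneg])
  thus ?thesis by (simp add: psi_def power_mult_distrib algebra_simps)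
qed

lemma q_crude: "q d n \<le> c n * real (M n) ^ d"
proof (induction n rule: less_induct)
  case (less n)
  show ?case
  proof (cases n)
    case 0 thus ?thesis by (simp add: q0 c_def)
  next
    case (Suc m)
    have "q d n = (\<Sum>i=1..n. psi d i * q d (n - i))" using Suc qrec by simp
    also have "\<dots> \<le> (\<Sum>i=1..n. c (n - i) * real (M n) ^ d)"
    proof (rule sum_mono)
      fix i assume i: "i \<in> {1..n}"
      have "psi d i * q d (n - i) \<le> c (n - i) * (real i * real (M (n - i))) ^ d"
        by (rule term_bound) (use i less in auto)
      also have "\<dots> \<le> c (n - i) * real (M n) ^ d"
      proof (rule mult_left_mono[OF _ c_nonneg], rule power_mono)
        have "real i * real (M (n - i)) \<le> real (M i) * real (M (n - i))"
          using M_ge[of i] by (intro mult_right_mono) auto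
        also have "\<dots> \<le> real (M n)" using M_supermult[of i "n - i"] i
          by (metis le_add_diff_inverse atLeastAtMost_iff of_nat_le_iff of_nat_mult)
        finally show "real i * real (M (n - i)) \<le> real (M n)" .
      qed simp
      finally show "psi d i * q d (n - i) \<le> c (n - i) * real (M n) ^ d" .
    qed
    also have "\<dots> = (\<Sum>i=1..n. c (n - i)) * real (M n) ^ d" by (simp add: sum_distrib_right)
    also have "\<dots> = c n * real (M n) ^ d" using Suc sumc[of m] by (simp add: c_def)
    finally show ?thesis .
  qed
qed

lemma big_ok: assumes "5 \<le> i" "i \<le> n" shows "9 * i * M (n - i) \<le> 8 * M n"
proof -
  have "54 * i * M (n - i) \<le> 45 * M i * M (n - i)" using M_big[OF assms(1)] by simp
  also have "\<dots> \<le> 45 * M n" using M_supermult[of i "n - i"] assms by simp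
  finally show ?thesis by simp
qed

lemma q_refined:
  assumes "1 \<le> n" "T \<subseteq> {1..n}" "\<forall>i\<in>{1..n} - T. 9 * i * M (n - i) \<le> 8 * M n"
  shows "q d n \<le> (\<Sum>i\<in>T. psi d i * q d (n - i)) + (8/9) ^ d * 2 ^ (n - 1) * real (M n) ^ d"
proof -
  obtain m where m: "n = Suc m" using assms(1) by (cases n) auto
  have "q d n = (\<Sum>i=1..n. psi d i * q d (n - i))" using m qrec by simp
  also have "\<dots> = (\<Sum>i\<in>T. psi d i * q d (n - i)) + (\<Sum>i\<in>{1..n} - T. psi d i * q d (n - i))"
    using assms(2) by (simp add: sum.subset_diff)
  also have "(\<Sum>i\<in>{1..n} - T. psi d i * q d (n - i)) \<le> (\<Sum>i\<in>{1..n} - T. c (n - i) * ((8/9) ^ d * real (M n) ^ d))"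
  proof (rule sum_mono)
    fix i assume i: "i \<in> {1..n} - T"
    have "psi d i * q d (n - i) \<le> c (n - i) * (real i * real (M (n - i))) ^ d"
      by (rule term_bound) (use i q_crude in auto)
    also have "\<dots> \<le> c (n - i) * (8/9 * real (M n)) ^ d"
    proof (rule mult_left_mono[OF _ c_nonneg], rule power_mono)
      have "real (9 * i * M (n - i)) \<le> real (8 * M n)" using assms(3) i of_nat_le_iff by blast
      thus "real i * real (M (n - i)) \<le> 8 / 9 * real (M n)" by simp
    qed simp
    also have "(8/9 * real (M n)) ^ d = (8/9) ^ d * real (M n) ^ d" by (rule power_mult_distrib)
    finally show "psi d i * q d (n - i) \<le> c (n - i) * ((8/9) ^ d * real (M n) ^ d)" .
  qed
  also have "\<dots> \<le> (\<Sum>i=1..n. c (n - i) * ((8/9) ^ d * real (M n) ^ d))"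
    by (rule sum_mono2) (auto intro!: mult_nonneg_nonneg c_nonneg)
  also have "\<dots> = (\<Sum>i=1..n. c (n - i)) * ((8/9) ^ d * real (M n) ^ d)" by (simp add: sum_distrib_right)
  also have "\<dots> = (8/9) ^ d * 2 ^ (n - 1) * real (M n) ^ d" using m sumc[of m] by simp
  finally show ?thesis by simp
qed



lemma M_3k3: "M (3 * k + 3) = 3 * 3 ^ k"
  using M_3k[of "Suc k"] by (simp add: add.commute)

lemma M_3k1: "M (3 * Suc k + 1) = 4 * 3 ^ k"
  using M_3k4[of k] by (simp add: add.commute)


lemma condA: "\<forall>i\<in>{1..3*k+3} - {3}. 9*i*M(3*k+3-i) \<le> 8*M(3*k+3)"
proof
  fix i assume i: "i \<in> {1..3*k+3} - {3}"
  show "9*i*M(3*k+3-i) \<le> 8*M(3*k+3)"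
  proof (cases "i \<ge> 5")
    case True thus ?thesis using big_ok i by auto
  next
    case False
    with i have "i = 1 \<or> i = 2 \<or> i = 4" by auto
    then show ?thesis
    proof (elim disjE)
      assume "i = 1" thus ?thesis using M_3k2[of k] M_3k3[of k] by simp
    next
      assume "i = 2" thus ?thesis
      proof (cases k)
        case 0 thus ?thesis using \<open>i = 2\<close> by (simp add: numeral_eq_Suc)
      next
        case (Suc k')
        have "3*k+3-i = 3 * Suc k' + 1" using Suc \<open>i = 2\<close> by simp
        thus ?thesis using M_3k1[of k'] M_3k3[of k] Suc \<open>i = 2\<close> by simp
      qed
    next
      assume "i = 4"
      with i obtain k' where k': "k = Suc k'" by (cases k) auto
      have "3*k+3-i = 3 * k' + 2" using k' \<open>i = 4\<close> by simp
      thus ?thesis using M_3k2[of k'] M_3k3[of k] k' \<open>i = 4\<close> by simp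
    qed
  qed
qed

lemma famA: "q d (3*k) \<le> (1 + (8/9)^d * 2^(3*k)) * ((3::real)^k)^d"
proof (induction k)
  case 0 thus ?case by (simp add: q0)
next
  case (Suc k)
  let ?e = "(8/9::real)^d" and ?X = "((3::real)^k)^d"
  have "q d (3*k+3) \<le> (\<Sum>i\<in>{3}. psi d i * q d (3*k+3-i)) + ?e * 2^(3*k+3-1) * real (M (3*k+3))^d"
    by (rule q_refined) (use condA[of k] in auto)
  also have "real (M (3*k+3))^d = 3^d * ?X" using M_3k3[of k] by (simp add: power_mult_distrib)
  finally have 1: "q d (3*k+3) \<le> 3^d * q d (3*k) + ?e * 2^(3*k+2) * (3^d * ?X)" by (simp add: psi_num)
  have 2: "3^d * q d (3*k) \<le> 3^d * ((1 + ?e * 2^(3*k)) * ?X)" using Suc by (simp)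
  have w: "0 \<le> ?e * (3^d * ?X) * 2^(3*k)" by simp
  have "q d (3*Suc k) \<le> 3^d * ?X + 5 * (?e * (3^d * ?X) * 2^(3*k))"
    using 1 2 by (simp add: algebra_simps power_add)
  also have "\<dots> \<le> 3^d * ?X + 8 * (?e * (3^d * ?X) * 2^(3*k))" using w by linarith
  also have "\<dots> = (1 + ?e * 2^(3 * Suc k)) * ((3::real)^Suc k)^d"
    by (simp add: algebra_simps power_add power_mult_distrib)
  finally show ?case .
qed



lemma psi1: "psi d 1 = 1" by (simp add: psi_def)
lemma psi1': "psi d (Suc 0) = 1" by (simp add: psi_def)
lemma psi2': "psi d (Suc (Suc 0)) = 2 ^ d" by (simp add: psi_def)

lemma q1: "q d 1 = 1"
  using qrec[of "psi d" 0] by (simp add: q0 psi1')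

lemma q2': "q d (Suc (Suc 0)) = 1 + 2^d"
  using qrec[of "psi d" 1] q1[of d] by (simp add: q0 psi1' psi2')
lemma q2: "q d 2 = 1 + 2^d" using q2' by (simp add: numeral_2_eq_2)

lemma four_pow: "(4::real)^d = 2^d * 2^d"
  by (simp add: power_mult_distrib[symmetric])

lemma three_Suc: "3 * Suc k = 3 * k + 3" by simp

lemma six_pow: "(6::real)^d = 2^d * 3^d"
  by (simp add: power_mult_distrib[symmetric])

lemma sumC: "(\<Sum>i\<in>{2,3}. psi d i * q d (3*k+5-i)) = 2^d * q d (3*k+3) + 3^d * q d (3*k+2)"
proof -
  have "(\<Sum>i\<in>{2,3}. psi d i * q d (3*k+5-i)) = psi d 2 * q d (3*k+3) + psi d 3 * q d (3*k+2)"
    by (simp add: eval_nat_numeral)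
  thus ?thesis by (simp only: psi_num)
qed

lemma M_3k5: "M (3 * k + 5) = 6 * 3 ^ k"
  using M_3k2[of "Suc k"] by (simp add: add.commute)

lemma M_3k6: "M (3 * k + 6) = 9 * 3 ^ k"
  using M_3k3[of "Suc k"] by (simp add: add.commute)

lemma M_3k7: "M (3 * k + 7) = 12 * 3 ^ k"
  using M_3k4[of "Suc k"] by (simp add: add.commute)

lemma condC: "\<forall>i\<in>{1..3*k+5} - {2,3}. 9*i*M(3*k+5-i) \<le> 8*M(3*k+5)"
proof
  fix i assume i: "i \<in> {1..3*k+5} - {2,3}"
  show "9*i*M(3*k+5-i) \<le> 8*M(3*k+5)"
  proof (cases "i \<ge> 5")
    case True thus ?thesis using big_ok i by auto
  next
    case False
    with i have "i = 1 \<or> i = 4" by auto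
    then show ?thesis
    proof (elim disjE)
      assume "i = 1" thus ?thesis using M_3k4[of k] M_3k5[of k] by (simp add: add.commute)
    next
      assume "i = 4" thus ?thesis
      proof (cases k)
        case 0 thus ?thesis using \<open>i = 4\<close> by (simp add: numeral_eq_Suc)
      next
        case (Suc k')
        have "3*k+5-i = 3 * Suc k' + 1" using Suc \<open>i = 4\<close> by simp
        thus ?thesis using M_3k1[of k'] M_3k5[of k] Suc \<open>i = 4\<close> by simp
      qed
    qed
  qed
qed

lemma famC: "q d (3*k+2) \<le> (real k + 1 + (8/9)^d * 2^(3*k+2)) * ((2::real)*3^k)^d"
proof (induction k)
  case 0
  have "(1::real) \<le> 4 * ((8/9)^d * 2^d)"
  proof -
    have "(1::real) \<le> (16/9)^d" by (rule one_le_power) simp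
    also have "(16/9::real)^d = (8/9)^d * 2^d" by (simp add: power_mult_distrib[symmetric])
    finally show ?thesis by simp
  qed
  thus ?case by (simp add: q2' algebra_simps)
next
  case (Suc k)
  let ?e = "(8/9::real)^d" and ?X = "((3::real)^k)^d"
  let ?Z = "2^d * 3^d * ?X" and ?w = "(8/9::real)^d * (2^d * 3^d * ((3::real)^k)^d) * 2^(3*k)"
  have "q d (3*k+5) \<le> (\<Sum>i\<in>{2,3}. psi d i * q d (3*k+5-i)) + ?e * 2^(3*k+5-1) * real (M (3*k+5))^d"
    by (rule q_refined) (use condC[of k] in auto)
  also have "real (M (3*k+5))^d = ?Z" using M_3k5[of k] by (simp add: power_mult_distrib six_pow)
  finally have 1: "q d (3*k+5) \<le> 2^d * q d (3*k+3) + 3^d * q d (3*k+2) + 16 * ?w"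
    unfolding sumC by (simp add: algebra_simps power_add)
  have A: "q d (3*k+3) \<le> (1 + ?e * 2^(3*k+3)) * (3*3^k)^d" using famA[of d "Suc k"] unfolding three_Suc by (simp add: power_mult_distrib)
  have "2^d * q d (3*k+3) \<le> 2^d * ((1 + ?e * 2^(3*k+3)) * (3*3^k)^d)"
    using A by simp
  also have "\<dots> = ?Z + 8 * ?w" by (simp add: algebra_simps power_add power_mult_distrib)
  finally have 2: "2^d * q d (3*k+3) \<le> ?Z + 8 * ?w" .
  have "3^d * q d (3*k+2) \<le> 3^d * ((real k + 1 + ?e * 2^(3*k+2)) * (2*3^k)^d)"
    using Suc by simp
  also have "\<dots> = (real k + 1) * ?Z + 4 * ?w" by (simp add: algebra_simps power_add power_mult_distrib)
  finally have 3: "3^d * q d (3*k+2) \<le> (real k + 1) * ?Z + 4 * ?w" .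
  have w: "0 \<le> ?w" by simp
  have "q d (3*Suc k+2) \<le> (real k + 2) * ?Z + 28 * ?w" using 1 2 3 by (simp add: algebra_simps)
  also have "\<dots> \<le> (real k + 2) * ?Z + 32 * ?w" using w by linarith
  also have "\<dots> = (real (Suc k) + 1 + ?e * 2^(3 * Suc k + 2)) * ((2::real)*3^Suc k)^d"
    by (simp add: algebra_simps power_add power_mult_distrib six_pow)
  finally show ?case .
qed

lemma famC_lower: "(real k + 1) * ((2::real)*3^k)^d \<le> q d (3*k+2)"
proof (induction k)
  case 0 thus ?case using q_ge_M[of 2 d] by (simp add: numeral_2_eq_2)
next
  case (Suc k)
  have "(\<Sum>i\<in>{2,3}. psi d i * q d (3*k+5-i)) \<le> q d (3*k+5)" by (rule q_lower_sum) auto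
  hence 1: "2^d * q d (3*k+3) + 3^d * q d (3*k+2) \<le> q d (3*k+5)" by (simp only: sumC)
  have "real (M (3*k+3))^d \<le> q d (3*k+3)" by (rule q_ge_M)
  hence "(3*3^k)^d \<le> q d (3*k+3)" using M_3k3[of k] by simp
  hence 2: "2^d * (3*3^k)^d \<le> 2^d * q d (3*k+3)" by simp
  have 3: "3^d * ((real k + 1) * ((2::real)*3^k)^d) \<le> 3^d * q d (3*k+2)" using Suc by simp
  have "(real (Suc k) + 1) * ((2::real)*3^Suc k)^d = 2^d * (3*3^k)^d + 3^d * ((real k + 1) * ((2::real)*3^k)^d)"
    by (simp add: algebra_simps power_mult_distrib six_pow)
  also have "\<dots> \<le> q d (3*k+5)" using 1 2 3 by linarith
  finally show ?case by (simp add: add.commute)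
qed



lemma twelve_pow: "(12::real)^d = 4^d * 3^d"
  by (simp add: power_mult_distrib[symmetric])

lemma cond4: "\<forall>i\<in>{1..4} - {2,4}. 9*i*M(4-i) \<le> 8*M(4::nat)"
proof
  fix i :: nat assume "i \<in> {1..4} - {2,4}"
  hence "i = 1 \<or> i = 3" by auto
  thus "9*i*M(4-i) \<le> 8*M 4" by (auto simp: numeral_eq_Suc)
qed

lemma condB: "\<forall>i\<in>{1..3*k+7} - {2,3,4}. 9*i*M(3*k+7-i) \<le> 8*M(3*k+7)"
proof
  fix i assume i: "i \<in> {1..3*k+7} - {2,3,4}"
  show "9*i*M(3*k+7-i) \<le> 8*M(3*k+7)"
  proof (cases "i \<ge> 5")
    case True thus ?thesis using big_ok i by auto
  next
    case False
    with i have "i = 1" by auto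
    thus ?thesis using M_3k6[of k] M_3k7[of k] by (simp add: add.commute)
  qed
qed

lemma sum4: "(\<Sum>i\<in>{2,4}. psi d i * q d (4-i)) = 2^d * q d 2 + 4^d"
proof -
  have "(\<Sum>i\<in>{2,4}. psi d i * q d (4-i)) = psi d 2 * q d 2 + psi d 4 * q d 0"
    by (simp add: eval_nat_numeral)
  thus ?thesis by (simp only: psi_num q0 mult_1_right)
qed

lemma sumB: "(\<Sum>i\<in>{2,3,4}. psi d i * q d (3*k+7-i)) = 2^d * q d (3*k+5) + 3^d * q d (3*k+4) + 4^d * q d (3*k+3)"
proof -
  have "(\<Sum>i\<in>{2,3,4}. psi d i * q d (3*k+7-i)) = psi d 2 * q d (3*k+5) + psi d 3 * q d (3*k+4) + psi d 4 * q d (3*k+3)"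
    by (simp add: eval_nat_numeral)
  thus ?thesis by (simp only: psi_num)
qed

lemma five_Suc: "3 * Suc k + 2 = 3 * k + 5" by simp

lemma famB: "q d (3*k+4) \<le> ((real k+1)*(real k+4)/2 + (8/9)^d*2^(3*k+4)) * ((4::real)*3^k)^d"
proof (induction k)
  case 0
  let ?e = "(8/9::real)^d"
  have "q d 4 \<le> (\<Sum>i\<in>{2,4}. psi d i * q d (4-i)) + ?e * 2^(4-1) * real (M 4)^d"
    by (rule q_refined) (use cond4 in auto)
  also have "M 4 = 4" by (simp add: numeral_eq_Suc)
  finally have 1: "q d 4 \<le> 2^d * q d 2 + 4^d + 8 * (?e * 4^d)" unfolding sum4 by simp
  have "q d 2 \<le> (1 + ?e * 4) * 2^d" using famC[of d 0] by (simp add: numeral_2_eq_2)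
  hence "2^d * q d 2 \<le> 2^d * ((1 + ?e * 4) * 2^d)" by simp
  also have "\<dots> = 4^d + 4 * (?e * 4^d)" by (simp add: four_pow algebra_simps)
  finally have 2: "2^d * q d 2 \<le> 4^d + 4 * (?e * 4^d)" .
  have w: "0 \<le> ?e * 4^d" by simp
  have "q d 4 \<le> 2 * 4^d + 16 * (?e * 4^d)" using 1 2 w by linarith
  thus ?case by (simp add: algebra_simps)
next
  case (Suc k)
  let ?e = "(8/9::real)^d" and ?X = "((3::real)^k)^d"
  let ?Z = "4^d * 3^d * ?X" and ?w = "(8/9::real)^d * (4^d * 3^d * ((3::real)^k)^d) * 2^(3*k)"
  have "q d (3*k+7) \<le> (\<Sum>i\<in>{2,3,4}. psi d i * q d (3*k+7-i)) + ?e * 2^(3*k+7-1) * real (M (3*k+7))^d"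
    by (rule q_refined) (use condB[of k] in auto)
  also have "real (M (3*k+7))^d = ?Z" using M_3k7[of k] by (simp add: power_mult_distrib twelve_pow)
  finally have 1: "q d (3*k+7) \<le> 2^d * q d (3*k+5) + 3^d * q d (3*k+4) + 4^d * q d (3*k+3) + 64 * ?w"
    unfolding sumB by (simp add: algebra_simps power_add)
  have C: "q d (3*k+5) \<le> (real k + 2 + ?e * 2^(3*k+5)) * (2*(3*3^k))^d"
    using famC[of d "Suc k"] unfolding five_Suc by (simp add: algebra_simps)
  have "2^d * q d (3*k+5) \<le> 2^d * ((real k + 2 + ?e * 2^(3*k+5)) * (2*(3*3^k))^d)"
    using C by simp
  also have "\<dots> = (real k + 2) * ?Z + 32 * ?w" by (simp add: algebra_simps power_add power_mult_distrib four_pow six_pow)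
  finally have 2: "2^d * q d (3*k+5) \<le> (real k + 2) * ?Z + 32 * ?w" .
  have "3^d * q d (3*k+4) \<le> 3^d * (((real k+1)*(real k+4)/2 + ?e*2^(3*k+4)) * ((4::real)*3^k)^d)"
    using Suc by simp
  also have "\<dots> = ((real k+1)*(real k+4)/2) * ?Z + 16 * ?w" by (simp add: algebra_simps power_add power_mult_distrib)
  finally have 3: "3^d * q d (3*k+4) \<le> ((real k+1)*(real k+4)/2) * ?Z + 16 * ?w" .
  have A: "q d (3*k+3) \<le> (1 + ?e * 2^(3*k+3)) * (3*3^k)^d" using famA[of d "Suc k"] unfolding three_Suc by (simp add: power_mult_distrib)
  have "4^d * q d (3*k+3) \<le> 4^d * ((1 + ?e * 2^(3*k+3)) * (3*3^k)^d)" using A by simp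
  also have "\<dots> = ?Z + 8 * ?w" by (simp add: algebra_simps power_add power_mult_distrib)
  finally have 4: "4^d * q d (3*k+3) \<le> ?Z + 8 * ?w" .
  have w: "0 \<le> ?w" by simp
  have eqN: "(real (Suc k)+1)*(real (Suc k)+4)/2 = (real k+1)*(real k+4)/2 + real k + 3"
    by (simp add: field_simps) 
  have "q d (3*Suc k+4) \<le> ((real k+1)*(real k+4)/2 + real k + 3) * ?Z + 120 * ?w"
    using 1 2 3 4 by (simp add: algebra_simps)
  also have "\<dots> \<le> ((real k+1)*(real k+4)/2 + real k + 3) * ?Z + 128 * ?w" using w by linarith
  also have "\<dots> = ((real (Suc k)+1)*(real (Suc k)+4)/2 + ?e * 2^(3 * Suc k + 4)) * ((4::real)*3^Suc k)^d"
    unfolding eqN by (simp add: algebra_simps power_add power_mult_distrib twelve_pow)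
  finally show ?case .
qed



lemma hyp_pow:
  assumes "real_of_int d > log (9/8) V" "V \<ge> 1"
  shows "V < (9/8::real) ^ nat d"
proof -
  have "log (9/8) V \<ge> 0" using assms(2) by simp
  hence "d > 0" using assms(1) by linarith
  hence r: "real (nat d) = real_of_int d" by simp
  have "V < (9/8) powr (real_of_int d)" using assms(1) log_less_iff[of "9/8" V] assms(2) by simp
  thus ?thesis using powr_realpow[of "9/8::real" "nat d"] r by simp
qed

lemma log_2pow: "log (9/8) ((2::real) ^ m) = real m * log (9/8) 2"
  by (rule log_nat_power) simp

lemma Dpsi0: "n mod 3 = 0 \<Longrightarrow> Dpsi n = log (9/8) ((2::real) ^ (2*n))"
  unfolding Dpsi_def log_2pow by simp

lemma Dpsi2: "n mod 3 = 2 \<Longrightarrow> n \<noteq> 5 \<Longrightarrow> Dpsi n = log (9/8) ((2::real) ^ (n+2))"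
  unfolding Dpsi_def log_2pow by simp

lemma Dpsi5: "Dpsi 5 = log (9/8) 512"
  unfolding Dpsi_def by simp

lemma Dpsi1: "n mod 3 = 1 \<Longrightarrow> Dpsi n = log (9/8) ((2::real) ^ (2*n) * 3 / (real n + 2))"
proof -
  assume h: "n mod 3 = 1"
  have "log (9/8) ((2::real) ^ (2*n) * 3 / (real n + 2)) = log (9/8) ((2::real) ^ (2*n) * 3) - log (9/8) (real n + 2)"
    by (rule log_divide_pos) auto
  also have "log (9/8) ((2::real) ^ (2*n) * 3) = log (9/8) ((2::real) ^ (2*n)) + log (9/8) 3"
    by (rule log_mult_pos) auto
  finally show ?thesis using h unfolding Dpsi_def log_2pow by simp
qed

lemma q_pos: "0 < q d n"
proof -
  have "(1::real) \<le> real (M n) ^ d" using M_pos[of n] by (intro one_le_power) linarith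
  thus ?thesis using q_ge_M[of n d] by linarith
qed

lemma ratio_iff: "0 < (y::real) \<Longrightarrow> 0 < z \<Longrightarrow> (x^2 / (y * z) < 1 \<longleftrightarrow> x^2 < y * z)"
  by (simp add: divide_less_eq)

lemma pow_div98: "(9/8::real)^d = 9^d / 8^d" by (simp add: power_divide)

lemma case0:
  fixes t d :: nat
  assumes V: "(2::real) ^ (2*(3*t+3)) < (9/8)^d"
  shows "q d (3*t+2) * q d (3*t+4) < (q d (3*t+3))^2"
proof -
  let ?X = "((3::real)^t)^d"
  have Xp: "0 < ?X" by simp
  have y: "q d (3*t+2) \<le> 2^(3*t+1) * (2^d * ?X)"
    using q_crude[of d "3*t+2"] M_3k2[of t] by (simp add: c_def power_mult_distrib)
  have z: "q d (3*t+4) \<le> 2^(3*t+3) * (4^d * ?X)"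
  proof -
    have "c (3*t+4) = 2^(3*t+3)" by (simp add: c_def)
    thus ?thesis using q_crude[of d "3*t+4"] M_3k4[of t] by (simp add: power_mult_distrib)
  qed
  have x: "3^d * ?X \<le> q d (3*t+3)"
    using q_ge_M[of "3*t+3" d] M_3k3[of t] by (simp add: power_mult_distrib)
  have "q d (3*t+2) * q d (3*t+4) \<le> (2^(3*t+1) * (2^d * ?X)) * (2^(3*t+3) * (4^d * ?X))"
    by (rule mult_mono[OF y z]) (use q_nonneg in auto)
  also have "\<dots> = 2^(6*t+4) * 8^d * ?X^2"
  proof -
    have e1: "(2::real)^(3*t+1) * 2^(3*t+3) = 2^(6*t+4)" by (subst power_add[symmetric]) simp
    have e2: "(2::real)^d * 4^d = 8^d" by (subst power_mult_distrib[symmetric]) simp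
    have "(2^(3*t+1) * (2^d * ?X)) * (2^(3*t+3) * (4^d * ?X)) = ((2::real)^(3*t+1) * 2^(3*t+3)) * (2^d * 4^d) * (?X * ?X)"
      by (simp only: mult_ac)
    thus ?thesis by (simp only: e1 e2 power2_eq_square)
  qed
  also have "\<dots> < 9^d * ?X^2"
  proof -
    have "(2::real)^(6*t+4) \<le> 2^(2*(3*t+3))" by (rule power_increasing) auto
    hence "(2::real)^(6*t+4) < 9^d / 8^d" using V pow_div98[of d] by linarith
    hence "(2::real)^(6*t+4) * 8^d < 9^d" by (simp add: field_simps)
    thus ?thesis using Xp by simp
  qed
  also have "\<dots> = (3^d * ?X)^2"
  proof -
    have e3: "(3::real)^d * 3^d = 9^d" by (subst power_mult_distrib[symmetric]) simp
    show ?thesis unfolding power2_eq_square by (simp only: e3[symmetric] mult_ac)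
  qed
  also have "\<dots> \<le> (q d (3*t+3))^2" using x by (intro power_mono) auto
  finally show ?thesis .
qed



lemma case1:
  fixes t d :: nat
  assumes V: "(2::real)^(2*(3*t+4)) * 3 / (real (3*t+4) + 2) < (9/8)^d"
  shows "(q d (3*t+4))^2 < q d (3*t+3) * q d (3*t+5)"
proof -
  let ?X = "((3::real)^t)^d"
  have Xp: "0 < ?X" by simp
  have x: "q d (3*t+4) \<le> 2^(3*t+3) * (4^d * ?X)"
  proof -
    have "c (3*t+4) = 2^(3*t+3)" by (simp add: c_def)
    thus ?thesis using q_crude[of d "3*t+4"] M_3k4[of t] by (simp add: power_mult_distrib)
  qed
  have y: "3^d * ?X \<le> q d (3*t+3)"
    using q_ge_M[of "3*t+3" d] M_3k3[of t] by (simp add: power_mult_distrib)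
  have z: "(real t + 2) * (6^d * ?X) \<le> q d (3*t+5)"
  proof -
    have "(real (Suc t) + 1) * ((2::real)*3^Suc t)^d \<le> q d (3*Suc t+2)" by (rule famC_lower)
    moreover have "((2::real)*3^Suc t)^d = 6^d * ?X" by (simp add: power_mult_distrib six_pow)
    ultimately show ?thesis unfolding five_Suc by (simp add: algebra_simps)
  qed
  have "(q d (3*t+4))^2 \<le> (2^(3*t+3) * (4^d * ?X))^2" using x q_nonneg by (intro power_mono) auto
  also have "\<dots> = 2^(6*t+6) * 16^d * ?X^2"
  proof -
    have e1: "(2::real)^(3*t+3) * 2^(3*t+3) = 2^(6*t+6)" by (subst power_add[symmetric]) simp
    have e2: "(4::real)^d * 4^d = 16^d" by (subst power_mult_distrib[symmetric]) simp
    have "(2^(3*t+3) * (4^d * ?X))^2 = ((2::real)^(3*t+3) * 2^(3*t+3)) * (4^d * 4^d) * (?X * ?X)"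
      unfolding power2_eq_square by (simp only: mult_ac)
    thus ?thesis by (simp only: e1 e2 power2_eq_square)
  qed
  also have "\<dots> < (real t + 2) * 18^d * ?X^2"
  proof -
    have tp: "real t + 2 > 0" by simp
    have "(2::real)^(2*(3*t+4))*3/(real (3*t+4)+2) = 2^(2*(3*t+4))/(real t+2)"
      using tp by (simp add: field_simps)
    hence "(2::real)^(2*(3*t+4)) / (real t + 2) < 9^d / 8^d" using V pow_div98[of d] by simp
    hence "(2::real)^(2*(3*t+4)) * 8^d < (real t + 2) * 9^d" by (simp add: field_simps)
    hence "(2::real)^(2*(3*t+4)) * 8^d * 2^d < (real t + 2) * 9^d * 2^d" by simp
    moreover have "(8::real)^d * 2^d = 16^d" by (subst power_mult_distrib[symmetric]) simp
    moreover have "(9::real)^d * 2^d = 18^d" by (subst power_mult_distrib[symmetric]) simp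
    moreover have "(2::real)^(6*t+6) \<le> 2^(2*(3*t+4))" by (rule power_increasing) auto
    ultimately have "(2::real)^(6*t+6) * 16^d < (real t + 2) * 18^d"
      by (smt (verit, best) mult.assoc mult_right_mono zero_le_power)
    thus ?thesis using Xp by simp
  qed
  also have "\<dots> = (3^d * ?X) * ((real t + 2) * (6^d * ?X))"
  proof -
    have e3: "(3::real)^d * 6^d = 18^d" by (subst power_mult_distrib[symmetric]) simp
    show ?thesis unfolding power2_eq_square e3[symmetric] by (simp only: mult_ac)
  qed
  also have "\<dots> \<le> q d (3*t+3) * q d (3*t+5)"
    by (rule mult_mono[OF y z]) (use q_nonneg in auto)
  finally show ?thesis .
qed

lemma case2:
  fixes t d :: nat
  assumes V: "(2::real)^(3*t+7) < (9/8)^d"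
  shows "q d (3*t+4) * q d (3*t+6) < (q d (3*t+5))^2"
proof -
  let ?X = "((3::real)^t)^d" and ?e = "(8/9::real)^d"
  let ?u = "?e * 2^(3*t+4)" and ?N = "(real t+1)*(real t+4)/2"
  have Xp: "0 < ?X" by simp
  have "(2::real)^(3*t+7) < 9^d / 8^d" using V pow_div98[of d] by simp
  hence "(2::real)^(3*t+7) * 8^d < 9^d" by (simp add: field_simps)
  hence "?e * 2^(3*t+7) < 1" by (simp add: power_divide field_simps)
  hence u8: "?u < 1/8" by (simp add: power_add)
  have u0: "0 \<le> ?u" by simp
  have y: "q d (3*t+4) \<le> (?N + ?u) * (4^d * ?X)"
    using famB[of d t] by (simp add: power_mult_distrib)
  have z: "q d (3*t+6) \<le> (1 + 4 * ?u) * (9^d * ?X)"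
  proof -
    have "q d (3*(t+2)) \<le> (1 + ?e * 2^(3*(t+2))) * ((3::real)^(t+2))^d" by (rule famA)
    moreover have "3*(t+2) = 3*t+6" by simp
    moreover have "((3::real)^(t+2))^d = 9^d * ?X"
    proof -
      have "(3::real)^(t+2) = 9 * 3^t" by (simp add: power_add)
      thus ?thesis by (simp add: power_mult_distrib)
    qed
    moreover have "(2::real)^(3*(t+2)) = 4 * 2^(3*t+4)" by (simp add: power_add)
    ultimately show ?thesis by (simp add: algebra_simps)
  qed
  have x: "(real t + 2) * (6^d * ?X) \<le> q d (3*t+5)"
  proof -
    have "(real (Suc t) + 1) * ((2::real)*3^Suc t)^d \<le> q d (3*Suc t+2)" by (rule famC_lower)
    moreover have "((2::real)*3^Suc t)^d = 6^d * ?X" by (simp add: power_mult_distrib six_pow)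
    ultimately show ?thesis unfolding five_Suc by (simp add: algebra_simps)
  qed
  have "q d (3*t+4) * q d (3*t+6) \<le> ((?N + ?u) * (4^d * ?X)) * ((1 + 4 * ?u) * (9^d * ?X))"
    by (rule mult_mono[OF y z]) (use q_nonneg u0 in auto)
  also have "\<dots> = ((?N + ?u) * (1 + 4 * ?u)) * (36^d * ?X^2)"
  proof -
    have e2: "(4::real)^d * 9^d = 36^d" by (subst power_mult_distrib[symmetric]) simp
    show ?thesis unfolding power2_eq_square e2[symmetric] by (simp only: mult_ac)
  qed
  also have "\<dots> < (real t + 2)^2 * (36^d * ?X^2)"
  proof (rule mult_strict_right_mono)
    have N0: "0 \<le> ?N" by simp
    have "(?N + ?u) * (1 + 4 * ?u) \<le> (?N + 1/8) * (3/2)"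
      by (rule mult_mono) (use u8 u0 N0 in auto)
    also have "\<dots> < (real t + 2)^2"
    proof -
      have h: "0 \<le> real t * (real t * 4)" "0 \<le> real t * 4" by simp_all
      show ?thesis apply (simp add: power2_eq_square field_simps) using h by linarith
    qed
    finally show "(?N + ?u) * (1 + 4 * ?u) < (real t + 2)^2" .
  qed (use Xp in simp)
  also have "\<dots> = ((real t + 2) * (6^d * ?X))^2"
  proof -
    have e3: "(6::real)^d * 6^d = 36^d" by (subst power_mult_distrib[symmetric]) simp
    show ?thesis unfolding power2_eq_square e3[symmetric] by (simp only: mult_ac)
  qed
  also have "\<dots> \<le> (q d (3*t+5))^2" using x by (intro power_mono) auto
  finally show ?thesis .
qed



theorem corollary1:
  fixes n :: nat and d :: int
  assumes "n \<ge> 3" and "real_of_int d > Dpsi n"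
  shows "(qcoef (psi (nat d)) n)\<^sup>2 / (qcoef (psi (nat d)) (n - 1) * qcoef (psi (nat d)) (n + 1)) < 1
         \<longleftrightarrow> n mod 3 = 1"
proof -
  define e where "e = nat d"
  have iff: "(q e n)\<^sup>2 / (q e (n - 1) * q e (n + 1)) < 1 \<longleftrightarrow> (q e n)\<^sup>2 < q e (n - 1) * q e (n + 1)"
    by (rule ratio_iff) (simp_all add: q_pos)
  define t where "t = n div 3 - 1"
  have nd: "n = 3 * (n div 3) + n mod 3" by simp
  have "n mod 3 = 0 \<or> n mod 3 = 1 \<or> n mod 3 = 2" by auto
  then have main: "(q e n)\<^sup>2 < q e (n - 1) * q e (n + 1) \<longleftrightarrow> n mod 3 = 1"
  proof (elim disjE)
    assume h: "n mod 3 = 0"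
    have n: "n = 3*t+3" using assms(1) h nd unfolding t_def by linarith
    have V: "(2::real)^(2*n) < (9/8)^e"
      unfolding e_def by (rule hyp_pow) (use assms(2) Dpsi0[OF h] in \<open>auto intro: one_le_power\<close>)
    have F: "q e (3*t+2) * q e (3*t+4) < (q e (3*t+3))^2" by (rule case0) (use V n in simp)
    have eq: "n - 1 = 3*t+2" "n + 1 = 3*t+4" using n by auto
    have "q e (n - 1) * q e (n + 1) < (q e n)^2" by (subst eq(1), subst eq(2), subst n) (rule F)
    thus ?thesis using h by auto
  next
    assume h: "n mod 3 = 1"
    have n: "n = 3*t+4" using assms(1) h nd unfolding t_def by linarith
    have ge: "1 \<le> (2::real)^(2*n) * 3 / (real n + 2)"
    proof -
      have "real n < 2^n" using less_exp[of n] by (metis of_nat_less_iff of_nat_numeral of_nat_power)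
      moreover have "(2::real)^n \<le> 2^(2*n)" by (rule power_increasing) auto
      moreover have "(1::real) \<le> 2^(2*n)" by (rule one_le_power) simp
      ultimately have "real n + 2 \<le> 2^(2*n) * 3" by linarith
      thus ?thesis by (simp add: field_simps)
    qed
    have V: "(2::real)^(2*n) * 3 / (real n + 2) < (9/8)^e"
      unfolding e_def by (rule hyp_pow) (use assms(2) Dpsi1[OF h] ge in auto)
    have F: "(q e (3*t+4))^2 < q e (3*t+3) * q e (3*t+5)" by (rule case1) (use V n in simp)
    have eq: "n - 1 = 3*t+3" "n + 1 = 3*t+5" using n by auto
    have "(q e n)^2 < q e (n - 1) * q e (n + 1)" by (subst eq(1), subst eq(2), subst n) (rule F)
    thus ?thesis using h by auto
  next
    assume h: "n mod 3 = 2"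
    have n: "n = 3*t+5" using assms(1) h nd unfolding t_def by linarith
    have V: "(2::real)^(3*t+7) < (9/8)^e"
    proof (cases "n = 5")
      case True
      have "(512::real) < (9/8)^e"
        unfolding e_def by (rule hyp_pow) (use assms(2) True Dpsi5 in auto)
      moreover have "t = 0" using True n by simp
      ultimately show ?thesis by simp
    next
      case False
      have o: "(1::real) \<le> 2^(n+2)" by (rule one_le_power) simp
      have "(2::real)^(n+2) < (9/8)^e"
        unfolding e_def by (rule hyp_pow) (use assms(2) Dpsi2[OF h False] o in auto)
      thus ?thesis using n by (simp add: add.commute)
    qed
    have F: "q e (3*t+4) * q e (3*t+6) < (q e (3*t+5))^2" by (rule case2[OF V])
    have eq: "n - 1 = 3*t+4" "n + 1 = 3*t+6" using n by auto
    have "q e (n - 1) * q e (n + 1) < (q e n)^2" by (subst eq(1), subst eq(2), subst n) (rule F)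
    thus ?thesis using h by auto
  qed
  show ?thesis using iff main unfolding e_def by simp
qed


end
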